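(* Let $d\geq 2$. For every bounded convex $\mathcal{D}\subset\mathbb{R}^d$ with non-empty interior and every badly approximable $\alpha\in\mathbb{R}^d$, we have \[\sup_{R\geq 1} L(\alpha,R^{-1}\mathcal{D})<\infty .\]
   Context: $\alpha\in\mathbb{R}^d$ is badly approximable if there is $c>0$ such that $\|m\cdot\alpha\|_{\mathbb{R}/\mathbb{Z}}>c\|m\|^{-d}$ for all non-zero $m\in\mathbb{Z}^d$, where $\|x\|_{\mathbb{R}/\mathbb{Z}}$ is the distance from $x$ to the nearest integer. For a set $\mathcal{D}\subset\mathbb{R}^d$ and $q\in\mathcal{D}$, $\tau(q,\mathcal{D})=\min\{n\in\mathbb{N}^*\mid q+n\alpha\in\mathcal{D}+\mathbb{Z}^d\}$ with $\mathbb{N}^*=\{1,2,\ldots\}$, and $L(\alpha,\mathcal{D})$ is the number of distinct values of $\tau(q,\mathcal{D})$ as $q$ ranges over $\mathcal{D}$. $R^{-1}\mathcal{D}=\{R^{-1}x\mid x\in\mathcal{D}\}$. *)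

theory Defs
  imports "HOL-Analysis.Analysis"
begin

definition dist_Z :: "real \<Rightarrow> real" where
  "dist_Z x = \<bar>x - of_int (round x)\<bar>"

definition int_lattice :: "(real ^ 'd) set" where
  "int_lattice = {z. \<forall>i. z $ i \<in> \<int>}"

definition badly_approximable :: "real ^ 'd \<Rightarrow> bool" where
  "badly_approximable \<alpha> \<longleftrightarrow>
     (\<exists>c>0. \<forall>m\<in>int_lattice. m \<noteq> 0 \<longrightarrow>
        dist_Z (m \<bullet> \<alpha>) > c * norm m powi (- int CARD('d)))"

definition return_time :: "real ^ 'd \<Rightarrow> (real ^ 'd) set \<Rightarrow> real ^ 'd \<Rightarrow> nat" where
  "return_time \<alpha> D q =
     (LEAST n::nat. n \<ge> 1 \<and> q + of_nat n *\<^sub>R \<alpha> \<in> {x + z | x z. x \<in> D \<and> z \<in> int_lattice})"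

text \<open>The set of return-time values; L(alpha, D) is its cardinality.\<close>
definition return_times :: "real ^ 'd \<Rightarrow> (real ^ 'd) set \<Rightarrow> nat set" where
  "return_times \<alpha> D = return_time \<alpha> D ` D"

end

theory Submission
  imports Defs
begin


definition e :: "real \<Rightarrow> complex" where "e t = cis (2*pi*t)"

lemma e_add: "e (a + b) = e a * e b"
  by (simp add: e_def cis_mult distrib_left)

lemma e_int: "k \<in> \<int> \<Longrightarrow> e k = 1"
  by (simp add: e_def)

lemma e_0[simp]: "e 0 = 1" by (simp add: e_def)

lemma norm_e[simp]: "norm (e t) = 1" by (simp add: e_def)

lemma cnj_e: "cnj (e t) = e (-t)" by (simp add: e_def cis_cnj)

lemma e_pow: "e t ^ n = e (real n * t)"
  by (induction n) (simp_all add: e_add[symmetric] algebra_simps)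

lemma prod_e: "finite A \<Longrightarrow> (\<Prod>i\<in>A. e (f i)) = e (\<Sum>i\<in>A. f i)"
  by (induction A rule: finite_induct) (simp_all add: e_add)

lemma dZ_nonneg: "dist_Z x \<ge> 0" by (simp add: dist_Z_def)

lemma dZ_le: "\<bar>dist_Z x\<bar> \<le> 1/2"
  unfolding dist_Z_def using of_int_round_ge[of x] of_int_round_le[of x] by (simp only: abs_le_iff abs_abs) linarith

lemma dZ_min: "dist_Z z \<le> \<bar>z - of_int m\<bar>"
  unfolding dist_Z_def by (rule round_diff_minimal)

lemma sin_lower: assumes "0 \<le> x" "x \<le> pi/2" shows "sin x \<ge> x/3"
proof -
  have h: "\<bar>sin x - (\<Sum>m<3. sin_coeff m * x ^ m)\<bar> \<le> inverse (fact 3) * \<bar>x\<bar> ^ 3"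
    by (rule Maclaurin_sin_bound)
  have s3: "(\<Sum>m<3. sin_coeff m * x ^ m) = x"
    by (simp add: numeral_3_eq_3 sin_coeff_def)
  have f3: "(fact 3::real) = 6" by (simp add: numeral_3_eq_3)
  have e3: "inverse (fact 3) * \<bar>x\<bar> ^ 3 = x^3/6" unfolding f3 using assms by (simp only: abs_of_nonneg divide_inverse mult.commute)
  have "\<bar>sin x - x\<bar> \<le> x^3/6" using h unfolding s3 e3 .
  then have "sin x \<ge> x - x^3/6" by linarith
  moreover have "x^3/6 \<le> x * (2/3)"
  proof -
    have "x^2 \<le> (pi/2)^2" using assms by (intro power_mono) auto
    also have "\<dots> \<le> 2*2" unfolding power2_eq_square using pi_less_4 pi_gt3 by (intro mult_mono) auto
    finally have "x * x^2 \<le> x * 4" using assms by (intro mult_left_mono) auto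
    then show ?thesis by (simp add: power3_eq_cube power2_eq_square mult.assoc)
  qed
  ultimately show ?thesis by linarith
qed

lemma sin_pi_ge_pos: assumes "0 \<le> u" "u \<le> 1/2" shows "sin (pi*u) \<ge> u"
proof -
  have "sin (pi*u) \<ge> pi*u/3" using assms by (intro sin_lower) auto
  moreover have "pi*u \<ge> 3*u" using assms pi_gt3 by (intro mult_right_mono) auto
  ultimately show ?thesis by auto
qed

lemma abs_sin_pi_ge: assumes "\<bar>u\<bar> \<le> 1/2" shows "\<bar>sin (pi*u)\<bar> \<ge> \<bar>u\<bar>"
proof (cases "u \<ge> 0")
  case True
  then show ?thesis using sin_pi_ge_pos[of u] assms by auto
next
  case False
  then have "sin (pi*(-u)) \<ge> -u" using assms by (intro sin_pi_ge_pos) auto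
  then show ?thesis using False by simp
qed

lemma norm_e_minus_1: "norm (e t - 1) = 2 * \<bar>sin (pi*t)\<bar>"
proof -
  have "e t - 1 = cis (pi*t) * (cis (pi*t) - cis (-(pi*t)))"
    by (simp add: e_def cis_mult algebra_simps)
  also have "cis (pi*t) - cis (-(pi*t)) = complex_of_real (2 * sin (pi*t)) * \<i>"
    by (simp add: complex_eq_iff)
  finally show ?thesis by (simp add: norm_mult)
qed

lemma e_shift_int: "e (t - of_int k) = e t"
  by (simp add: e_def cis_divide[symmetric] right_diff_distrib)

lemma norm_e_minus_1_ge: "norm (e t - 1) \<ge> 2 * dist_Z t"
proof -
  define u where "u = t - of_int (round t)"
  have "e t = e u" unfolding u_def by (simp add: e_shift_int)
  have "\<bar>u\<bar> \<le> 1/2" using dZ_le[of t] by (simp add: u_def dist_Z_def)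
  then have "\<bar>sin (pi*u)\<bar> \<ge> \<bar>u\<bar>" by (rule abs_sin_pi_ge)
  then show ?thesis using \<open>e t = e u\<close> norm_e_minus_1[of u] by (simp add: dist_Z_def u_def)
qed



lemma geo_bound: assumes "dist_Z t > 0" shows "norm (\<Sum>j<L. e (real j * t)) \<le> 1 / dist_Z t"
proof -
  define z where "z = e t"
  have nz: "norm (1 - z) \<ge> 2 * dist_Z t" using norm_e_minus_1_ge[of t]
    by (simp add: z_def norm_minus_commute)
  then have z1: "z \<noteq> 1" using assms by auto
  have "(\<Sum>j<L. e (real j * t)) = (\<Sum>j<L. z^j)" by (simp add: z_def e_pow)
  also have "\<dots> = (1 - z^L) / (1 - z)" using z1 by (simp add: sum_gp_strict)
  finally have eq: "(\<Sum>j<L. e (real j * t)) = (1 - z^L) / (1 - z)" .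
  have "norm (1 - z^L) \<le> 2"
  proof -
    have "norm (1 - z^L) \<le> norm (1::complex) + norm (z^L)" by (rule norm_triangle_ineq4)
    also have "\<dots> = 2" by (simp add: z_def norm_power)
    finally show ?thesis .
  qed
  then have "norm ((1 - z^L) / (1 - z)) \<le> 2 / norm (1 - z)"
    using nz assms by (simp add: norm_divide divide_right_mono)
  also have "\<dots> \<le> 2 / (2 * dist_Z t)" using nz assms
    by (intro divide_left_mono) (auto intro!: mult_pos_pos)
  finally show ?thesis using eq by simp
qed

definition FF :: "nat \<Rightarrow> real \<Rightarrow> real" where
  "FF L t = (norm (\<Sum>j<L. e (real j * t)))^2 / real L"

lemma FF_nonneg: "FF L t \<ge> 0" by (simp add: FF_def)

lemma norm_sum_e_le: "norm (\<Sum>j<L. e (real j * t)) \<le> real L"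
proof -
  have "norm (\<Sum>j<L. e (real j * t)) \<le> (\<Sum>j<L. norm (e (real j * t)))" by (rule norm_sum)
  also have "\<dots> = real L" by simp
  finally show ?thesis .
qed

lemma FF_le: "FF L t \<le> real L"
proof (cases "L = 0")
  case True then show ?thesis by (simp add: FF_def)
next
  case False
  have "(norm (\<Sum>j<L. e (real j * t)))^2 \<le> (real L)^2"
    using norm_sum_e_le by (intro power_mono) auto
  then show ?thesis using False by (simp add: FF_def divide_le_eq power2_eq_square)
qed

lemma FF_decay: assumes "dist_Z t > 0" "L > 0" shows "FF L t \<le> 1 / (real L * dist_Z t ^ 2)"
proof -
  have "(norm (\<Sum>j<L. e (real j * t)))^2 \<le> (1 / dist_Z t)^2"
    using geo_bound[OF assms(1)] by (intro power_mono) auto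
  then show ?thesis using assms by (simp add: FF_def power_divide divide_simps)
qed

lemma FF_1[simp]: "FF 1 t = 1" by (simp add: FF_def)

lemma e_round: "e (real j * t) = e (real j * (t - of_int (round t)))"
proof -
  have "real j * t = real j * (t - of_int (round t)) + of_int (int j * round t)" by (simp add: algebra_simps)
  then show ?thesis by (simp only: e_add e_int Ints_of_int) simp
qed

lemma FF_low: assumes "L \<ge> 1" "dist_Z t \<le> 1 / (8 * real L)" shows "FF L t \<ge> real L / 2"
proof -
  define u where "u = t - of_int (round t)"
  have u: "\<bar>u\<bar> \<le> 1 / (8 * real L)" using assms by (simp add: u_def dist_Z_def)
  have c: "cos (2*pi*(real j * u)) \<ge> sqrt 2 / 2" if "j < L" for j
  proof -
    have "\<bar>real j * u\<bar> \<le> real L * (1 / (8 * real L))"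
      using u that by (simp only: abs_mult abs_of_nat) (intro mult_mono, auto)
    also have "\<dots> = 1/8" using assms by simp
    finally have "\<bar>2*pi*(real j * u)\<bar> \<le> pi/4" by (simp add: abs_mult)
    then have "cos (pi/4) \<le> cos \<bar>2*pi*(real j * u)\<bar>"
      by (intro cos_monotone_0_pi_le) auto
    then show ?thesis by (simp add: cos_45)
  qed
  have "Re (\<Sum>j<L. e (real j * t)) = (\<Sum>j<L. cos (2*pi*(real j * u)))"
  proof -
    have "(\<Sum>j<L. e (real j * t)) = (\<Sum>j<L. e (real j * u))"
      unfolding u_def by (intro sum.cong refl) (rule e_round)
    then show ?thesis by (simp add: e_def)
  qed
  also have "\<dots> \<ge> (\<Sum>j<L. sqrt 2 / 2)" using c by (intro sum_mono) auto
  finally have "Re (\<Sum>j<L. e (real j * t)) \<ge> real L * (sqrt 2 / 2)" by simp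
  then have n: "norm (\<Sum>j<L. e (real j * t)) \<ge> real L * (sqrt 2 / 2)"
    using complex_Re_le_cmod order_trans by blast
  have p: "(real L * (sqrt 2 / 2))^2 \<le> (norm (\<Sum>j<L. e (real j * t)))^2"
    using n by (intro power_mono) auto
  have eq: "(real L * (sqrt 2 / 2))^2 = real L ^2 / 2"
    by (simp add: power_mult_distrib power_divide)
  have "real L ^ 2 / 2 \<le> (norm (\<Sum>j<L. e (real j * t)))^2" using p by (simp only: eq)
  then show ?thesis using assms by (simp add: FF_def divide_simps power2_eq_square)
qed

lemma FF_expand: "complex_of_real (FF L t) =
   (\<Sum>p\<in>{..<L}\<times>{..<L}. complex_of_real (1 / real L) * e ((real (fst p) - real (snd p)) * t))"
proof -
  have "complex_of_real ((norm (\<Sum>j<L. e (real j * t)))^2) =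
        (\<Sum>j<L. e (real j * t)) * cnj (\<Sum>j<L. e (real j * t))"
    by (rule complex_norm_square)
  also have "\<dots> = (\<Sum>a<L. \<Sum>b<L. e (real a * t) * e (- (real b * t)))"
    by (simp add: sum_product cnj_e)
  also have "\<dots> = (\<Sum>p\<in>{..<L}\<times>{..<L}. e ((real (fst p) - real (snd p)) * t))"
    by (simp add: sum.cartesian_product e_add[symmetric] algebra_simps case_prod_beta)
  finally show ?thesis
    by (simp add: FF_def sum_distrib_left[symmetric] divide_inverse mult.commute)
qed



definition QQ :: "nat \<Rightarrow> nat \<Rightarrow> ((nat \<times> nat) \<times> (nat \<times> nat)) set" where
  "QQ M l = ({..<M} \<times> {..<M}) \<times> ({..<l} \<times> {..<l})"

definition kq :: "(nat \<times> nat) \<times> (nat \<times> nat) \<Rightarrow> int" where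
  "kq q = int (fst (fst q)) - int (snd (fst q)) + int (fst (snd q)) - int (snd (snd q))"

lemma finite_QQ[simp]: "finite (QQ M l)" by (simp add: QQ_def)

lemma FF2_expand: "complex_of_real (FF M t * FF l t / real l) =
   (\<Sum>q\<in>QQ M l. complex_of_real (1 / (real M * real l * real l)) * e (of_int (kq q) * t))"
proof -
  have "complex_of_real (FF M t * FF l t / real l) =
      complex_of_real (FF M t) * complex_of_real (FF l t) * complex_of_real (1 / real l)" by simp
  also have "\<dots> = (\<Sum>p\<in>{..<M}\<times>{..<M}. \<Sum>p'\<in>{..<l}\<times>{..<l}.
        complex_of_real (1 / real M) * e ((real (fst p) - real (snd p)) * t) *
        (complex_of_real (1 / real l) * e ((real (fst p') - real (snd p')) * t))) * complex_of_real (1 / real l)"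
    unfolding FF_expand sum_product ..
  also have "\<dots> = (\<Sum>q\<in>QQ M l. complex_of_real (1 / (real M * real l * real l)) * e (of_int (kq q) * t))"
    unfolding QQ_def sum.cartesian_product sum_distrib_right
    by (intro sum.cong refl) (auto simp: kq_def e_add[symmetric] algebra_simps)
  finally show ?thesis .
qed

definition Phi :: "nat \<Rightarrow> ('d::finite \<Rightarrow> nat) \<Rightarrow> real^'d \<Rightarrow> real" where
  "Phi M ll y = (\<Prod>i\<in>UNIV. FF M (y$i) * FF (ll i) (y$i) / real (ll i))"

definition WW :: "nat \<Rightarrow> ('d::finite \<Rightarrow> nat) \<Rightarrow> real" where
  "WW M ll = (\<Prod>i\<in>UNIV. 1 / (real M * real (ll i) * real (ll i)))"

lemma Phi_expand: "complex_of_real (Phi M ll y) =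
  (\<Sum>\<tau>\<in>PiE UNIV (\<lambda>i. QQ M (ll i)). complex_of_real (WW M ll) *
      e (\<Sum>i\<in>UNIV. of_int (kq (\<tau> i)) * y$i))"
proof -
  have "complex_of_real (Phi M ll y) = (\<Prod>i\<in>UNIV. complex_of_real (FF M (y$i) * FF (ll i) (y$i) / real (ll i)))"
    unfolding Phi_def by (rule of_real_prod)
  also have "\<dots> = (\<Prod>i\<in>UNIV. \<Sum>q\<in>QQ M (ll i). complex_of_real (1 / (real M * real (ll i) * real (ll i))) * e (of_int (kq q) * y$i))"
    by (simp only: FF2_expand)
  also have "\<dots> = (\<Sum>\<tau>\<in>PiE UNIV (\<lambda>i. QQ M (ll i)). \<Prod>i\<in>UNIV. complex_of_real (1 / (real M * real (ll i) * real (ll i))) * e (of_int (kq (\<tau> i)) * y$i))"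
    by (rule prod_sum_PiE) auto
  also have "\<dots> = (\<Sum>\<tau>\<in>PiE UNIV (\<lambda>i. QQ M (ll i)). complex_of_real (WW M ll) *
      e (\<Sum>i\<in>UNIV. of_int (kq (\<tau> i)) * y$i))"
    by (intro sum.cong refl) (simp only: prod.distrib prod_e[OF finite_class.finite] WW_def of_real_prod)
  finally show ?thesis .
qed

definition theta :: "real^'d \<Rightarrow> ('d::finite \<Rightarrow> int) \<Rightarrow> real" where
  "theta \<alpha> k = (\<Sum>i\<in>UNIV. of_int (k i) * \<alpha>$i)"

definition OS :: "(real^'d \<Rightarrow> real) \<Rightarrow> nat \<Rightarrow> real^'d \<Rightarrow> real^'d \<Rightarrow> real" where
  "OS f N x \<alpha> = (\<Sum>j<N. \<Sum>j'<N. f (x + real (j + j' + 2) *\<^sub>R \<alpha>))"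

lemma orbit:
  fixes f :: "real^'d::finite \<Rightarrow> real" and T :: "'t set" and \<kappa> :: "'t \<Rightarrow> 'd \<Rightarrow> int"
  assumes finT: "finite T" and W: "W \<ge> 0"
    and rep: "\<And>y. complex_of_real (f y) = (\<Sum>\<tau>\<in>T. complex_of_real W * e (\<Sum>i\<in>UNIV. of_int (\<kappa> \<tau> i) * y$i))"
    and mult: "\<And>k. W * real (card {\<tau>\<in>T. \<kappa> \<tau> = k}) \<le> Bm"
    and dz: "\<And>\<tau>. \<tau>\<in>T \<Longrightarrow> \<kappa> \<tau> \<noteq> (\<lambda>_. 0) \<Longrightarrow> dist_Z (theta \<alpha> (\<kappa> \<tau>)) > 0"
  shows "\<bar>OS f N x \<alpha> - real N ^ 2 * W * real (card {\<tau>\<in>T. \<kappa> \<tau> = (\<lambda>_. 0)})\<bar>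
     \<le> Bm * (\<Sum>k\<in>\<kappa> ` T - {\<lambda>_. 0}. 1 / dist_Z (theta \<alpha> k) ^ 2)"
proof -
  define kx where "kx \<tau> = (\<Sum>i\<in>UNIV. of_int (\<kappa> \<tau> i) * x$i)" for \<tau>
  define th where "th \<tau> = theta \<alpha> (\<kappa> \<tau>)" for \<tau>
  define A where "A \<tau> = e (kx \<tau> + 2 * th \<tau>) * (\<Sum>j<N. e (real j * th \<tau>))^2" for \<tau>
  have lin: "(\<Sum>i\<in>UNIV. of_int (\<kappa> \<tau> i) * (x + real n *\<^sub>R \<alpha>)$i) = kx \<tau> + real n * th \<tau>" for \<tau> n
    by (simp add: kx_def th_def theta_def algebra_simps sum.distrib sum_distrib_left)
  have inner: "(\<Sum>j<N. \<Sum>j'<N. e (kx \<tau> + real (j + j' + 2) * th \<tau>)) = A \<tau>" for \<tau>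
  proof -
    have "(\<Sum>j<N. \<Sum>j'<N. e (kx \<tau> + real (j + j' + 2) * th \<tau>)) =
          (\<Sum>j<N. \<Sum>j'<N. e (kx \<tau> + 2 * th \<tau>) * (e (real j * th \<tau>) * e (real j' * th \<tau>)))"
      by (intro sum.cong refl) (simp add: e_add[symmetric] algebra_simps)
    also have "\<dots> = e (kx \<tau> + 2 * th \<tau>) * (\<Sum>j<N. \<Sum>j'<N. e (real j * th \<tau>) * e (real j' * th \<tau>))"
      by (simp only: sum_distrib_left)
    also have "\<dots> = A \<tau>" unfolding A_def power2_eq_square sum_product ..
    finally show ?thesis .
  qed
  have "complex_of_real (OS f N x \<alpha>) = (\<Sum>j<N. \<Sum>j'<N. \<Sum>\<tau>\<in>T. complex_of_real W * e (kx \<tau> + real (j + j' + 2) * th \<tau>))"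
    unfolding OS_def of_real_sum rep lin ..
  also have "\<dots> = (\<Sum>\<tau>\<in>T. complex_of_real W * A \<tau>)"
    unfolding inner[symmetric] sum_distrib_left
    by (simp only: sum.swap[of _ T])
  finally have S: "complex_of_real (OS f N x \<alpha>) = (\<Sum>\<tau>\<in>T. complex_of_real W * A \<tau>)" .
  define T0 where "T0 = {\<tau>\<in>T. \<kappa> \<tau> = (\<lambda>_. 0)}"
  define T1 where "T1 = {\<tau>\<in>T. \<kappa> \<tau> \<noteq> (\<lambda>_. 0)}"
  have TT: "T = T0 \<union> T1" "T0 \<inter> T1 = {}" by (auto simp: T0_def T1_def)
  have fin: "finite T0" "finite T1" using finT by (auto simp: T0_def T1_def)
  have A0: "A \<tau> = of_nat (N^2)" if "\<tau> \<in> T0" for \<tau>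
  proof -
    have "\<kappa> \<tau> = (\<lambda>_. 0)" using that by (simp add: T0_def)
    then have "kx \<tau> = 0" "th \<tau> = 0" by (simp_all add: kx_def th_def theta_def)
    then show ?thesis by (simp add: A_def)
  qed
  have "(\<Sum>\<tau>\<in>T. complex_of_real W * A \<tau>) = (\<Sum>\<tau>\<in>T0. complex_of_real W * A \<tau>) + (\<Sum>\<tau>\<in>T1. complex_of_real W * A \<tau>)"
    using TT fin by (simp add: sum.union_disjoint)
  also have "(\<Sum>\<tau>\<in>T0. complex_of_real W * A \<tau>) = complex_of_real (real N ^ 2 * W * real (card T0))"
    using A0 by simp
  finally have S2: "complex_of_real (OS f N x \<alpha> - real N ^ 2 * W * real (card T0)) = (\<Sum>\<tau>\<in>T1. complex_of_real W * A \<tau>)"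
    using S by simp
  have nA: "norm (A \<tau>) \<le> 1 / dist_Z (th \<tau>) ^ 2" if "\<tau> \<in> T1" for \<tau>
  proof -
    have pos: "dist_Z (th \<tau>) > 0" using dz that by (auto simp: T1_def th_def)
    have "norm (A \<tau>) = (norm (\<Sum>j<N. e (real j * th \<tau>)))^2" by (simp add: A_def norm_mult norm_power)
    also have "\<dots> \<le> (1 / dist_Z (th \<tau>))^2" using geo_bound[OF pos] by (intro power_mono) auto
    finally show ?thesis by (simp add: power_divide)
  qed
  have "\<bar>OS f N x \<alpha> - real N ^ 2 * W * real (card T0)\<bar> = norm (\<Sum>\<tau>\<in>T1. complex_of_real W * A \<tau>)"
    using S2 by (metis norm_of_real)
  also have "\<dots> \<le> (\<Sum>\<tau>\<in>T1. norm (complex_of_real W * A \<tau>))" by (rule norm_sum)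
  also have "\<dots> \<le> (\<Sum>\<tau>\<in>T1. W * (1 / dist_Z (th \<tau>) ^ 2))"
  proof (intro sum_mono)
    fix \<tau> assume "\<tau> \<in> T1"
    then have "W * norm (A \<tau>) \<le> W * (1 / dist_Z (th \<tau>) ^ 2)" using nA W by (intro mult_left_mono) auto
    then show "norm (complex_of_real W * A \<tau>) \<le> W * (1 / dist_Z (th \<tau>) ^ 2)" using W by (simp add: norm_mult)
  qed
  also have "\<dots> = (\<Sum>k\<in>\<kappa> ` T1. \<Sum>\<tau>\<in>{\<tau>\<in>T1. \<kappa> \<tau> = k}. W * (1 / dist_Z (th \<tau>) ^ 2))"
    using fin(2) by (rule sum.image_gen)
  also have "\<dots> = (\<Sum>k\<in>\<kappa> ` T1. W * real (card {\<tau>\<in>T. \<kappa> \<tau> = k}) * (1 / dist_Z (theta \<alpha> k) ^ 2))"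
  proof (intro sum.cong refl)
    fix k assume k: "k \<in> \<kappa> ` T1"
    then have "{\<tau>\<in>T1. \<kappa> \<tau> = k} = {\<tau>\<in>T. \<kappa> \<tau> = k}" by (auto simp: T1_def)
    then show "(\<Sum>\<tau>\<in>{\<tau>\<in>T1. \<kappa> \<tau> = k}. W * (1 / dist_Z (th \<tau>) ^ 2)) =
        W * real (card {\<tau>\<in>T. \<kappa> \<tau> = k}) * (1 / dist_Z (theta \<alpha> k) ^ 2)"
      by (simp add: th_def)
  qed
  also have "\<dots> \<le> (\<Sum>k\<in>\<kappa> ` T1. Bm * (1 / dist_Z (theta \<alpha> k) ^ 2))"
    using mult by (intro sum_mono mult_right_mono) auto
  also have "\<kappa> ` T1 = \<kappa> ` T - {\<lambda>_. 0}" by (auto simp: T1_def)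
  finally show ?thesis by (simp add: T0_def sum_distrib_left)
qed



lemma recip_sq_le: "X \<ge> 1 \<Longrightarrow> (\<Sum>m\<in>{1..X}. 1 / real m ^ 2) \<le> 2 - 1 / real X"
proof (induction X rule: dec_induct)
  case base then show ?case by simp
next
  case (step n)
  have n0: "real n > 0" using step.hyps by simp
  have eq: "1 / real n - 1 / real (Suc n) = 1 / (real n * real (Suc n))"
    using n0 by (simp add: field_simps)
  have "1 / real (Suc n) ^ 2 \<le> 1 / (real n * real (Suc n))"
    using n0 by (intro divide_left_mono) (auto simp: power2_eq_square)
  then have "1 / real (Suc n) ^ 2 \<le> 1 / real n - 1 / real (Suc n)" by (simp only: eq)
  then show ?case using step.IH by (simp add: sum.cl_ivl_Suc)
qed

lemma recip_sq_set: assumes "finite S" "0 \<notin> S" shows "(\<Sum>m\<in>S. 1 / real m ^ 2) \<le> 2"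
proof (cases "S = {}")
  case True then show ?thesis by simp
next
  case False
  define X where "X = Max S"
  have "X \<in> S" using assms False by (simp add: X_def)
  then have X1: "X \<ge> 1" using assms by (cases X) auto
  have sub: "S \<subseteq> {1..X}"
  proof
    fix x assume x: "x \<in> S"
    have "x \<noteq> 0"
    proof
      assume "x = 0" with x assms(2) show False by simp
    qed
    moreover have "x \<le> X" unfolding X_def using x assms(1) by (rule Max_ge[rotated])
    ultimately show "x \<in> {1..X}" by simp
  qed
  have "(\<Sum>m\<in>S. 1 / real m ^ 2) \<le> (\<Sum>m\<in>{1..X}. 1 / real m ^ 2)"
    using sub by (intro sum_mono2) auto
  also have "\<dots> \<le> 2 - 1 / real X" using X1 by (rule recip_sq_le)
  finally have "(\<Sum>m\<in>S. 1 / real m ^ 2) \<le> 2 - 1 / real X" .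
  moreover have "1 / real X \<ge> 0" by simp
  ultimately show ?thesis by linarith
qed

lemma sep_sum:
  fixes v :: "'a \<Rightarrow> real"
  assumes "finite U" "\<sigma> > 0" and gt: "\<And>k. k \<in> U \<Longrightarrow> v k > \<sigma>"
    and sep: "\<And>k k'. k \<in> U \<Longrightarrow> k' \<in> U \<Longrightarrow> k \<noteq> k' \<Longrightarrow> \<bar>v k - v k'\<bar> > \<sigma>"
  shows "(\<Sum>k\<in>U. 1 / v k ^ 2) \<le> 2 / \<sigma>^2"
proof -
  define g where "g k = nat \<lfloor>v k / \<sigma>\<rfloor>" for k
  have g1: "g k \<ge> 1" if "k \<in> U" for k
  proof -
    have "v k / \<sigma> > 1" using gt[OF that] assms(2) by (simp add: field_simps)
    then show ?thesis by (simp add: g_def) linarith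
  qed
  have gle: "real (g k) * \<sigma> \<le> v k" if "k \<in> U" for k
  proof -
    have "of_int \<lfloor>v k / \<sigma>\<rfloor> \<le> v k / \<sigma>" by (rule of_int_floor_le)
    moreover have "\<lfloor>v k / \<sigma>\<rfloor> \<ge> 0" using gt[OF that] assms(2) by simp
    ultimately have "of_int \<lfloor>v k / \<sigma>\<rfloor> * \<sigma> \<le> v k / \<sigma> * \<sigma>" using assms(2) by (intro mult_right_mono) auto
    then show ?thesis using assms(2) \<open>\<lfloor>v k / \<sigma>\<rfloor> \<ge> 0\<close> by (simp add: g_def)
  qed
  have inj: "inj_on g U"
  proof (rule inj_onI)
    fix k k' assume k: "k \<in> U" "k' \<in> U" "g k = g k'"
    show "k = k'"
    proof (rule ccontr)
      assume "k \<noteq> k'"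
      then have "\<bar>v k - v k'\<bar> > \<sigma>" using sep k by auto
      then have "\<bar>v k / \<sigma> - v k' / \<sigma>\<bar> > 1" using assms(2)
        by (simp add: diff_divide_distrib[symmetric] abs_divide field_simps)
      moreover have "\<lfloor>v k / \<sigma>\<rfloor> = \<lfloor>v k' / \<sigma>\<rfloor>"
        using k g1[OF k(1)] g1[OF k(2)] by (simp add: g_def)
      ultimately show False by linarith
    qed
  qed
  have "(\<Sum>k\<in>U. 1 / v k ^ 2) \<le> (\<Sum>k\<in>U. (1/\<sigma>^2) * (1 / real (g k) ^ 2))"
  proof (intro sum_mono)
    fix k assume k: "k \<in> U"
    have "0 < real (g k) * \<sigma>" using g1[OF k] assms(2) by simp
    then have "(real (g k) * \<sigma>)^2 \<le> v k ^ 2" using gle[OF k] by (intro power_mono) auto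
    then have "1 / v k ^ 2 \<le> 1 / (real (g k) * \<sigma>)^2"
      using \<open>0 < real (g k) * \<sigma>\<close> g1[OF k] assms(2) by (intro divide_left_mono mult_pos_pos) auto
    then show "1 / v k ^ 2 \<le> (1/\<sigma>^2) * (1 / real (g k) ^ 2)" by (simp add: power_mult_distrib mult.commute)
  qed
  also have "\<dots> = (1/\<sigma>^2) * (\<Sum>m\<in>g ` U. 1 / real m ^ 2)"
    using inj by (simp add: sum_distrib_left sum.reindex)
  also have "\<dots> \<le> (1/\<sigma>^2) * 2"
  proof (intro mult_left_mono recip_sq_set)
    show "0 \<notin> g ` U"
    proof
      assume "0 \<in> g ` U" then obtain k where "k \<in> U" "g k = 0" by auto
      then show False using g1[of k] by simp
    qed
  qed (use assms(1) in auto)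
  finally show ?thesis by simp
qed

lemma abs_iv: "(\<bar>a\<bar> \<le> (K::int)) = (a \<in> {-K..K})" by auto

definition Box :: "nat \<Rightarrow> ('d \<Rightarrow> int) set" where
  "Box K = {k. \<forall>i. \<bar>k i\<bar> \<le> int K}"

lemma finite_Box: "finite (Box K :: ('d::finite \<Rightarrow> int) set)"
proof -
  have "Box K = PiE UNIV (\<lambda>_::'d. {-int K..int K})"
    by (rule set_eqI) (simp add: Box_def PiE_def extensional_def Pi_def abs_iv)
  then show ?thesis by (simp add: finite_PiE)
qed

lemma theta_diff: "theta \<alpha> (\<lambda>i. k i - k' i) = theta \<alpha> k - theta \<alpha> k'"
  by (simp add: theta_def algebra_simps sum_subtractf)

lemma badk:
  fixes \<alpha> :: "real^'d::finite"
  assumes c: "c > 0" and bad: "\<And>m. m\<in>int_lattice \<Longrightarrow> m \<noteq> 0 \<Longrightarrow> dist_Z (m \<bullet> \<alpha>) > c * norm m powi (- int CARD('d))"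
    and k0: "k \<noteq> (\<lambda>_. 0)" and kK: "\<And>i. \<bar>k i\<bar> \<le> int K"
  shows "dist_Z (theta \<alpha> k) > c / (real CARD('d) * real K) ^ CARD('d)"
proof -
  define m :: "real^'d" where "m = (\<chi> i. of_int (k i))"
  have ml: "m \<in> int_lattice" by (simp add: m_def int_lattice_def)
  obtain i0 where "k i0 \<noteq> 0" using k0 by auto
  have Kpos: "K > 0" using kK[of i0] \<open>k i0 \<noteq> 0\<close> by (cases K) auto
  from \<open>k i0 \<noteq> 0\<close> have m0: "m \<noteq> 0" by (metis m_def of_int_eq_0_iff vec_lambda_beta zero_index)
  have ma: "m \<bullet> \<alpha> = theta \<alpha> k" by (simp add: m_def theta_def inner_vec_def)
  have "norm m \<le> (\<Sum>i\<in>UNIV. \<bar>m$i\<bar>)" by (rule norm_le_l1_cart)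
  also have "\<dots> \<le> (\<Sum>i\<in>(UNIV::'d set). real K)"
  proof (intro sum_mono)
    fix i
    have "real_of_int \<bar>k i\<bar> \<le> real_of_int (int K)" using kK[of i] by (simp only: of_int_le_iff)
    then show "\<bar>m$i\<bar> \<le> real K" by (simp add: m_def)
  qed
  also have "\<dots> = real CARD('d) * real K" by simp
  finally have nm: "norm m \<le> real CARD('d) * real K" .
  have np: "norm m > 0" using m0 by simp
  have "c / (real CARD('d) * real K) ^ CARD('d) \<le> c / norm m ^ CARD('d)"
    using nm np c Kpos by (intro divide_left_mono power_mono mult_pos_pos zero_less_power) auto
  also have "\<dots> = c * norm m powi (- int CARD('d))"
    by (simp add: power_int_minus divide_inverse)
  also have "\<dots> < dist_Z (m \<bullet> \<alpha>)" using bad ml m0 by auto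
  finally show ?thesis using ma by simp
qed

lemma sum_recip:
  fixes \<alpha> :: "real^'d::finite"
  assumes c: "c > 0" and bad: "\<And>m. m\<in>int_lattice \<Longrightarrow> m \<noteq> 0 \<Longrightarrow> dist_Z (m \<bullet> \<alpha>) > c * norm m powi (- int CARD('d))"
    and K: "K \<ge> 1"
  shows "(\<Sum>k\<in>Box K - {\<lambda>_. 0}. 1 / dist_Z (theta \<alpha> k) ^ 2) \<le> 4 * (2 * real CARD('d) * real K) ^ (2 * CARD('d)) / c^2"
proof -
  define d where "d = CARD('d)"
  define \<sigma> where "\<sigma> = c / (real d * real (2*K)) ^ d"
  have dpos: "d > 0" by (simp add: d_def)
  have \<sigma>: "\<sigma> > 0" using c K dpos by (simp add: \<sigma>_def)
  define U where "U = Box K - {\<lambda>_::'d. 0}"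
  have finU: "finite U" by (simp add: U_def finite_Box)
  define u where "u k = theta \<alpha> k - of_int (round (theta \<alpha> k))" for k
  have ud: "\<bar>u k\<bar> = dist_Z (theta \<alpha> k)" for k by (simp add: u_def dist_Z_def)
  have big: "\<bar>u k\<bar> > \<sigma>" if "k \<in> U" for k
  proof -
    have "dist_Z (theta \<alpha> k) > c / (real CARD('d) * real (2*K)) ^ CARD('d)"
      using that by (intro badk[OF c bad]) (auto simp: U_def Box_def intro: order_trans)
    then show ?thesis by (simp add: ud \<sigma>_def d_def)
  qed
  have sepa: "\<bar>u k - u k'\<bar> > \<sigma>" if "k \<in> U" "k' \<in> U" "k \<noteq> k'" for k k'
  proof -
    have "dist_Z (theta \<alpha> (\<lambda>i. k i - k' i)) > c / (real CARD('d) * real (2*K)) ^ CARD('d)"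
    proof (rule badk[OF c bad])
      show "(\<lambda>i. k i - k' i) \<noteq> (\<lambda>_. 0)" using that(3) by (auto simp: fun_eq_iff)
      show "\<bar>k i - k' i\<bar> \<le> int (2 * K)" for i
        using that(1,2) by (auto simp: U_def Box_def abs_le_iff) (smt (verit) )+
    qed
    also have "dist_Z (theta \<alpha> (\<lambda>i. k i - k' i)) \<le> \<bar>u k - u k'\<bar>"
    proof -
      have "dist_Z (theta \<alpha> (\<lambda>i. k i - k' i)) \<le>
         \<bar>theta \<alpha> (\<lambda>i. k i - k' i) - of_int (round (theta \<alpha> k) - round (theta \<alpha> k'))\<bar>"
        by (rule dZ_min)
      also have "\<dots> = \<bar>u k - u k'\<bar>" by (simp add: theta_diff u_def algebra_simps)
      finally show ?thesis .
    qed
    finally show ?thesis by (simp add: \<sigma>_def d_def)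
  qed
  define Up where "Up = {k\<in>U. u k > 0}"
  define Um where "Um = {k\<in>U. u k < 0}"
  have UU: "U = Up \<union> Um" "Up \<inter> Um = {}"
    using big \<sigma> by (auto simp: Up_def Um_def) (smt (verit) )
  have bp: "u k > \<sigma>" if "k \<in> Up" for k using big[of k] that by (auto simp: Up_def)
  have bm: "- u k > \<sigma>" if "k \<in> Um" for k using big[of k] that by (auto simp: Um_def)
  have sp: "\<bar>u k - u k'\<bar> > \<sigma>" if "k \<in> Up" "k' \<in> Up" "k \<noteq> k'" for k k'
    using sepa that by (auto simp: Up_def)
  have sm: "\<bar>- u k - - u k'\<bar> > \<sigma>" if "k \<in> Um" "k' \<in> Um" "k \<noteq> k'" for k k'
    using sepa[of k k'] that by (auto simp: Um_def abs_minus_commute)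
  have fp: "finite Up" "finite Um" using finU by (auto simp: Up_def Um_def)
  have "(\<Sum>k\<in>U. 1 / dist_Z (theta \<alpha> k) ^ 2) = (\<Sum>k\<in>U. 1 / (u k)^2)"
    by (simp add: ud[symmetric])
  also have "\<dots> = (\<Sum>k\<in>Up. 1 / (u k)^2) + (\<Sum>k\<in>Um. 1 / (- u k)^2)"
    using UU finU by (simp add: sum.union_disjoint)
  also have "(\<Sum>k\<in>Up. 1 / (u k)^2) \<le> 2 / \<sigma>^2"
    by (rule sep_sum[OF fp(1) \<sigma> bp sp])
  also have "(\<Sum>k\<in>Um. 1 / (- u k)^2) \<le> 2 / \<sigma>^2"
    by (rule sep_sum[OF fp(2) \<sigma> bm sm])
  finally have "(\<Sum>k\<in>U. 1 / dist_Z (theta \<alpha> k) ^ 2) \<le> 4 / \<sigma>^2" by simp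
  also have "4 / \<sigma>^2 = 4 * (2 * real CARD('d) * real K) ^ (2 * CARD('d)) / c^2"
    by (simp add: \<sigma>_def d_def power_divide power_mult_distrib power_mult field_simps)
  finally show ?thesis by (simp add: U_def)
qed



definition PQ :: "nat \<Rightarrow> ('d::finite \<Rightarrow> nat) \<Rightarrow> ('d \<Rightarrow> (nat \<times> nat) \<times> (nat \<times> nat)) set" where
  "PQ M ll = PiE UNIV (\<lambda>i. QQ M (ll i))"

definition kv :: "('d \<Rightarrow> (nat \<times> nat) \<times> (nat \<times> nat)) \<Rightarrow> 'd \<Rightarrow> int" where
  "kv \<tau> = (\<lambda>i. kq (\<tau> i))"

definition mu :: "nat \<Rightarrow> ('d::finite \<Rightarrow> nat) \<Rightarrow> real" where
  "mu M ll = WW M ll * real (card {\<tau>\<in>PQ M ll. kv \<tau> = (\<lambda>_. 0)})"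

lemma finite_PQ[simp]: "finite (PQ M ll)" by (simp add: PQ_def finite_PiE)

lemma mult_bound:
  assumes "M \<ge> 1" "\<And>i. ll i \<ge> 1"
  shows "WW M ll * real (card {\<tau>\<in>PQ M ll. kv \<tau> = k}) \<le> 1"
proof -
  define proj where "proj \<tau> = (\<lambda>i. (snd (fst (\<tau> i)), snd (\<tau> i)))" for \<tau> :: "'a \<Rightarrow> (nat \<times> nat) \<times> (nat \<times> nat)"
  define R where "R = PiE UNIV (\<lambda>i. {..<M} \<times> ({..<ll i} \<times> {..<ll i}))"
  have inj: "inj_on proj {\<tau>\<in>PQ M ll. kv \<tau> = k}"
  proof (rule inj_onI)
    fix \<tau> \<tau>' assume t: "\<tau> \<in> {\<tau>\<in>PQ M ll. kv \<tau> = k}" "\<tau>' \<in> {\<tau>\<in>PQ M ll. kv \<tau> = k}" "proj \<tau> = proj \<tau>'"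
    show "\<tau> = \<tau>'"
    proof
      fix i
      have p: "snd (fst (\<tau> i)) = snd (fst (\<tau>' i))" "snd (\<tau> i) = snd (\<tau>' i)"
        using t(3) by (auto simp: proj_def fun_eq_iff)
      have "kv \<tau> i = kv \<tau>' i" using t(1,2) by simp
      then have "kq (\<tau> i) = kq (\<tau>' i)" by (simp add: kv_def)
      then have "fst (fst (\<tau> i)) = fst (fst (\<tau>' i))" using p by (simp add: kq_def)
      then show "\<tau> i = \<tau>' i" using p by (simp add: prod_eq_iff)
    qed
  qed
  have sub: "proj ` {\<tau>\<in>PQ M ll. kv \<tau> = k} \<subseteq> R"
  proof
    fix y assume "y \<in> proj ` {\<tau>\<in>PQ M ll. kv \<tau> = k}"
    then obtain \<tau> where t: "\<tau> \<in> PQ M ll" "y = proj \<tau>" by auto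
    have "\<tau> i \<in> QQ M (ll i)" for i using t(1) by (auto simp: PQ_def PiE_def Pi_def)
    then have "proj \<tau> i \<in> {..<M} \<times> ({..<ll i} \<times> {..<ll i})" for i
      unfolding proj_def QQ_def by (simp add: mem_Times_iff)
    then show "y \<in> R" using t(2) by (auto simp: R_def PiE_def Pi_def)
  qed
  have "card {\<tau>\<in>PQ M ll. kv \<tau> = k} = card (proj ` {\<tau>\<in>PQ M ll. kv \<tau> = k})"
    using inj by (simp add: card_image)
  also have "\<dots> \<le> card R" using sub by (intro card_mono) (auto simp: R_def finite_PiE)
  also have "card R = (\<Prod>i\<in>UNIV. M * (ll i * ll i))" by (simp add: R_def card_PiE card_cartesian_product)
  finally have c0: "card {\<tau>\<in>PQ M ll. kv \<tau> = k} \<le> (\<Prod>i\<in>UNIV. M * (ll i * ll i))" .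
  have "real (card {\<tau>\<in>PQ M ll. kv \<tau> = k}) \<le> real (\<Prod>i\<in>UNIV. M * (ll i * ll i))"
    using c0 by (simp only: of_nat_le_iff)
  also have "real (\<Prod>i\<in>UNIV. M * (ll i * ll i)) = (\<Prod>i\<in>UNIV. real M * real (ll i) * real (ll i))"
    by (simp only: of_nat_prod of_nat_mult mult.assoc)
  finally have c: "real (card {\<tau>\<in>PQ M ll. kv \<tau> = k}) \<le> (\<Prod>i\<in>UNIV. real M * real (ll i) * real (ll i))" .
  have pos: "(\<Prod>i\<in>UNIV. real M * real (ll i) * real (ll i)) > 0"
    using assms by (intro prod_pos) (auto intro!: mult_pos_pos simp: Suc_le_eq)
  have "WW M ll * real (card {\<tau>\<in>PQ M ll. kv \<tau> = k}) \<le> WW M ll * (\<Prod>i\<in>UNIV. real M * real (ll i) * real (ll i))"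
    using c by (intro mult_left_mono) (auto simp: WW_def intro!: prod_nonneg)
  also have "\<dots> = 1" using pos assms by (simp add: WW_def prod_dividef Suc_le_eq)
  finally show ?thesis .
qed

lemma mu_le1: "M \<ge> 1 \<Longrightarrow> (\<And>i. ll i \<ge> 1) \<Longrightarrow> mu M ll \<le> 1"
  unfolding mu_def by (rule mult_bound)

lemma mu_prod: "mu M ll = (\<Prod>i\<in>UNIV. real (card {q\<in>QQ M (ll i). kq q = 0}) / (real M * real (ll i) * real (ll i)))"
proof -
  have "{\<tau>\<in>PQ M ll. kv \<tau> = (\<lambda>_. 0)} = PiE UNIV (\<lambda>i. {q\<in>QQ M (ll i). kq q = 0})"
    by (auto simp: PQ_def kv_def PiE_def Pi_def fun_eq_iff)
  then have "card {\<tau>\<in>PQ M ll. kv \<tau> = (\<lambda>_. 0)} = (\<Prod>i\<in>UNIV. card {q\<in>QQ M (ll i). kq q = 0})"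
    by (simp add: card_PiE)
  then show ?thesis by (simp add: mu_def WW_def prod.distrib[symmetric] divide_inverse ac_simps)
qed

lemma card0_one: "card {q\<in>QQ M 1. kq q = 0} = M"
proof -
  have "{q\<in>QQ M 1. kq q = 0} = (\<lambda>a. ((a,a),(0,0))) ` {..<M}"
    by (auto simp: QQ_def kq_def image_iff)
  then show ?thesis by (simp add: card_image inj_on_def)
qed

lemma card0_L: assumes "2 * L \<le> M" shows "real (card {q\<in>QQ M L. kq q = 0}) \<ge> real L * real L * (real M - 2 * real L)"
proof -
  define f where "f p = ((fst p - fst (snd p) + snd (snd p), fst p), snd p)" for p :: "nat \<times> nat \<times> nat"
  define A where "A = {L..<M-L} \<times> ({..<L} \<times> {..<L})"
  have "f ` A \<subseteq> {q\<in>QQ M L. kq q = 0}"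
    using assms by (auto simp: f_def A_def QQ_def kq_def)
  moreover have "inj_on f A" by (auto simp: f_def inj_on_def)
  ultimately have "card A \<le> card {q\<in>QQ M L. kq q = 0}"
    by (metis (no_types, lifting) card_image card_mono finite_QQ finite_subset mem_Collect_eq subsetI)
  moreover have "card A = (M - 2*L) * (L * L)" by (simp add: A_def card_cartesian_product mult_2)
  ultimately have "(M - 2*L) * (L * L) \<le> card {q\<in>QQ M L. kq q = 0}" by simp
  then have h: "real ((M - 2*L) * (L * L)) \<le> real (card {q\<in>QQ M L. kq q = 0})" by (simp only: of_nat_le_iff)
  have e: "real ((M - 2*L) * (L * L)) = (real M - 2 * real L) * (real L * real L)"
  proof -
    have "real (M - 2*L) = real M - real (2 * L)" by (rule of_nat_diff[OF assms])
    then show ?thesis by (simp only: of_nat_mult) simp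
  qed
  have e2: "real L * real L * (real M - 2 * real L) = (real M - 2 * real L) * (real L * real L)"
    by (rule mult.commute)
  show ?thesis using h unfolding e e2 .
qed

lemma kq_bound: "q \<in> QQ M l \<Longrightarrow> l \<le> M \<Longrightarrow> \<bar>kq q\<bar> \<le> int (2*M)"
  by (auto simp: QQ_def kq_def)

lemma Phi_orbit:
  fixes \<alpha> :: "real^'d::finite"
  assumes c: "c > 0" and bad: "\<And>m. m\<in>int_lattice \<Longrightarrow> m \<noteq> 0 \<Longrightarrow> dist_Z (m \<bullet> \<alpha>) > c * norm m powi (- int CARD('d))"
    and M: "M \<ge> 1" and ll: "\<And>i. ll i \<ge> 1" "\<And>i. ll i \<le> M"
  shows "\<bar>OS (Phi M ll) N x \<alpha> - real N ^ 2 * mu M ll\<bar> \<le> 4 * (2 * real CARD('d) * real (2*M)) ^ (2 * CARD('d)) / c^2"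
proof -
  have box: "kv \<tau> \<in> Box (2*M)" if "\<tau> \<in> PQ M ll" for \<tau>
  proof -
    have "\<tau> i \<in> QQ M (ll i)" for i using that by (auto simp: PQ_def PiE_def Pi_def)
    then have "\<bar>kq (\<tau> i)\<bar> \<le> int (2*M)" for i using kq_bound ll(2) by blast
    then show ?thesis by (simp add: Box_def kv_def)
  qed
  have "\<bar>OS (Phi M ll) N x \<alpha> - real N ^ 2 * WW M ll * real (card {\<tau>\<in>PQ M ll. kv \<tau> = (\<lambda>_. 0)})\<bar>
     \<le> 1 * (\<Sum>k\<in>kv ` PQ M ll - {\<lambda>_. 0}. 1 / dist_Z (theta \<alpha> k) ^ 2)"
  proof (rule orbit)
    show "WW M ll \<ge> 0" using M ll by (auto simp: WW_def intro!: prod_nonneg)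
    show "complex_of_real (Phi M ll y) = (\<Sum>\<tau>\<in>PQ M ll. complex_of_real (WW M ll) * e (\<Sum>i\<in>UNIV. of_int (kv \<tau> i) * y$i))" for y
      unfolding Phi_expand PQ_def kv_def ..
    show "WW M ll * real (card {\<tau>\<in>PQ M ll. kv \<tau> = k}) \<le> 1" for k
      using M ll(1) by (rule mult_bound)
    show "dist_Z (theta \<alpha> (kv \<tau>)) > 0" if "\<tau> \<in> PQ M ll" "kv \<tau> \<noteq> (\<lambda>_. 0)" for \<tau>
    proof -
      have "dist_Z (theta \<alpha> (kv \<tau>)) > c / (real CARD('d) * real (2*M)) ^ CARD('d)"
        using box[OF that(1)] that(2) by (intro badk[OF c bad]) (auto simp: Box_def)
      moreover have "c / (real CARD('d) * real (2*M)) ^ CARD('d) > 0" using c M by simp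
      ultimately show ?thesis by linarith
    qed
  qed simp
  also have "\<dots> \<le> (\<Sum>k\<in>Box (2*M) - {\<lambda>_. 0}. 1 / dist_Z (theta \<alpha> k) ^ 2)"
    using box by (simp only: mult_1) (intro sum_mono2, auto simp: finite_Box)
  also have "\<dots> \<le> 4 * (2 * real CARD('d) * real (2*M)) ^ (2 * CARD('d)) / c^2"
    using M by (intro sum_recip[OF c bad]) auto
  finally show ?thesis by (simp add: mu_def mult.assoc)
qed



lemma FF_Suc0[simp]: "FF (Suc 0) t = 1" using FF_1 by simp
lemma card0_Suc0[simp]: "card {q\<in>QQ M (Suc 0). kq q = 0} = M" using card0_one by simp

lemma Phi_one: "Phi M (\<lambda>_. 1) y = (\<Prod>i\<in>UNIV. FF M (y$i))"
  by (simp add: Phi_def)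

lemma Phi_upd: "Phi M ((\<lambda>_. 1)(i := L)) y = (\<Prod>i'\<in>UNIV. FF M (y$i')) * (FF L (y$i) / real L)"
proof -
  have "Phi M ((\<lambda>_. 1)(i := L)) y = (\<Prod>i'\<in>UNIV. FF M (y$i') * (if i' = i then FF L (y$i) / real L else 1))"
    unfolding Phi_def by (intro prod.cong refl) auto
  also have "\<dots> = (\<Prod>i'\<in>UNIV. FF M (y$i')) * (\<Prod>i'\<in>UNIV. (if i' = i then FF L (y$i) / real L else 1))"
    by (rule prod.distrib)
  also have "(\<Prod>i'\<in>UNIV. (if i' = i then FF L (y$i) / real L else 1)) = FF L (y$i) / real L"
    by (simp add: prod.delta)
  finally show ?thesis .
qed

lemma mu_upd: assumes "L \<ge> 1" "2 * L \<le> M"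
  shows "mu M ((\<lambda>_. 1)(i := L)) \<ge> 1 - 2 * real L / real M"
proof -
  have M: "M \<ge> 1" using assms by simp
  have "mu M ((\<lambda>_. 1)(i := L)) = (\<Prod>i'\<in>UNIV. (if i' = i then real (card {q\<in>QQ M L. kq q = 0}) / (real M * real L * real L) else 1))"
    unfolding mu_prod using M by (intro prod.cong refl) (auto simp: card0_one)
  also have "\<dots> = real (card {q\<in>QQ M L. kq q = 0}) / (real M * real L * real L)"
    by (simp add: prod.delta)
  also have "\<dots> \<ge> real L * real L * (real M - 2 * real L) / (real M * real L * real L)"
    using card0_L[OF assms(2)] M assms(1) by (intro divide_right_mono) auto
  also have "real L * real L * (real M - 2 * real L) / (real M * real L * real L) = 1 - 2 * real L / real M"
    using M assms(1) by (simp add: field_simps)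
  finally show ?thesis .
qed

lemma OS_lin: "OS (\<lambda>y. a * f y + b * (\<Sum>i\<in>I. h i y)) N x \<alpha> = a * OS f N x \<alpha> + b * (\<Sum>i\<in>I. OS (h i) N x \<alpha>)"
proof -
  have "OS (\<lambda>y. a * f y + b * (\<Sum>i\<in>I. h i y)) N x \<alpha> =
     a * OS f N x \<alpha> + b * (\<Sum>j<N. \<Sum>j'<N. \<Sum>i\<in>I. h i (x + real (j + j' + 2) *\<^sub>R \<alpha>))"
    by (simp add: OS_def sum.distrib sum_distrib_left)
  also have "(\<Sum>j<N. \<Sum>j'<N. \<Sum>i\<in>I. h i (x + real (j + j' + 2) *\<^sub>R \<alpha>)) = (\<Sum>i\<in>I. OS (h i) N x \<alpha>)"
    unfolding OS_def by (simp only: sum.swap[of _ I])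
  finally show ?thesis .
qed

lemma G_nonneg: "Phi M (\<lambda>_. 1) y \<ge> 0"
  unfolding Phi_one by (simp add: prod_nonneg FF_nonneg)

lemma key_pointwise:
  fixes y :: "real^'d::finite"
  assumes r: "r > 0" and L: "real L \<ge> 2 / r" and i0: "dist_Z (y$i0) \<ge> r"
  shows "Phi M (\<lambda>_. 1) y * (1 - 4/3 * (\<Sum>i\<in>UNIV. (1 - FF L (y$i) / real L))) \<le> 0"
proof -
  have Lpos: "real L > 0" using L r by (smt (verit) divide_pos_pos)
  have t0: "1 - FF L (y$i) / real L \<ge> 0" for i
    using FF_le[of L "y$i"] Lpos by (simp add: divide_le_eq)
  have "FF L (y$i0) \<le> 1 / (real L * dist_Z (y$i0) ^ 2)"
    using i0 r Lpos by (intro FF_decay) auto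
  also have "\<dots> \<le> 1 / (real L * r^2)"
    using i0 r Lpos by (intro divide_left_mono mult_left_mono power_mono mult_pos_pos) auto
  finally have f1: "FF L (y$i0) \<le> 1 / (real L * r^2)" .
  have "real L * r \<ge> 2" using L r by (simp add: divide_le_eq mult.commute)
  then have "(real L * r)^2 \<ge> 2^2" by (intro power_mono) auto
  then have Lr: "real L * real L * r^2 \<ge> 4" by (simp add: power_mult_distrib power2_eq_square mult_ac)
  have "FF L (y$i0) / real L \<le> 1 / (real L * r^2) / real L" by (rule divide_right_mono[OF f1]) (use Lpos in simp)
  also have "\<dots> = 1 / (real L * real L * r^2)" by simp
  also have "\<dots> \<le> 1/4" using Lr by (simp add: divide_simps)
  finally have "1 - FF L (y$i0) / real L \<ge> 3/4" by simp
  moreover have "(\<Sum>i\<in>UNIV. (1 - FF L (y$i) / real L)) \<ge> 1 - FF L (y$i0) / real L"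
    using t0 by (intro member_le_sum) auto
  ultimately have "1 - 4/3 * (\<Sum>i\<in>UNIV. (1 - FF L (y$i) / real L)) \<le> 0" by linarith
  then show ?thesis using G_nonneg[of M y] by (rule mult_nonneg_nonpos[rotated])
qed



lemma hit:
  fixes \<alpha> :: "real^'d::finite" and x :: "real^'d"
  assumes c: "c > 0" and bad: "\<And>m. m\<in>int_lattice \<Longrightarrow> m \<noteq> 0 \<Longrightarrow> dist_Z (m \<bullet> \<alpha>) > c * norm m powi (- int CARD('d))"
    and r: "0 < r" "r \<le> 1"
  shows "\<exists>n. n \<ge> 1 \<and> real n \<le> (2 * (5 * real CARD('d) * (72 * real CARD('d)^2) ^ CARD('d) / c) + 2) / r ^ CARD('d)
          \<and> (\<forall>i. dist_Z ((x + real n *\<^sub>R \<alpha>)$i) < r)"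
proof -
  define d where "d = CARD('d)"
  have d1: "real d \<ge> 1" by (simp add: d_def Suc_le_eq)
  define L where "L = nat \<lceil>2 / r\<rceil>"
  have L1: "real L \<ge> 2 / r" unfolding L_def by linarith
  have L2: "real L \<le> 3 / r"
  proof -
    have "2/r > 0" using r by simp
    then have c0: "\<lceil>2/r\<rceil> \<ge> 0" by (subst zero_le_ceiling) linarith
    have "real L = of_int \<lceil>2/r\<rceil>" unfolding L_def using c0 by simp
    also have "\<dots> \<le> 2 / r + 1" by (rule of_int_ceiling_le_add_one)
    finally have "real L \<le> 2 / r + 1" .
    also have "\<dots> \<le> 3 / r" using r by (simp add: field_simps)
    finally show ?thesis .
  qed
  have "2 / r > 0" using r by simp
  then have "real L > 0" using L1 by linarith
  then have Lpos: "L \<ge> 1" by simp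
  define M where "M = 6 * d * L"
  have M1: "M \<ge> 1" using Lpos by (simp add: M_def d_def)
  have LM: "L \<le> M" "2 * L \<le> M" by (auto simp: M_def d_def)
  have Mb: "real M \<le> 18 * real d / r"
  proof -
    have "real M = 6 * real d * real L" by (simp add: M_def)
    also have "\<dots> \<le> 6 * real d * (3 / r)" using L2 by (intro mult_left_mono) auto
    also have "\<dots> = 18 * real d / r" by simp
    finally show ?thesis .
  qed
  define E where "E = 4 * (2 * real d * real (2*M)) ^ (2 * d) / c^2"
  have E0: "E \<ge> 0" by (simp add: E_def)
  have Eb: "E \<le> 4 * (72 * real d ^ 2) ^ (2*d) / (c^2 * r^(2*d))"
  proof -
    have "2 * real d * real (2*M) \<le> 72 * real d ^ 2 / r"
    proof -
      have "2 * real d * real (2*M) = 4 * real d * real M" by simp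
      also have "\<dots> \<le> 4 * real d * (18 * real d / r)" using Mb d1 by (intro mult_left_mono) auto
      also have "\<dots> = 72 * real d ^ 2 / r" by (simp add: power2_eq_square)
      finally show ?thesis .
    qed
    then have "(2 * real d * real (2*M)) ^ (2*d) \<le> (72 * real d ^ 2 / r) ^ (2*d)"
      by (intro power_mono) auto
    also have "(72 * real d ^ 2 / r) ^ (2*d) = (72 * real d ^ 2) ^ (2*d) / r ^ (2*d)" by (rule power_divide)
    finally have X: "(2 * real d * real (2*M)) ^ (2*d) \<le> (72 * real d ^ 2) ^ (2*d) / r ^ (2*d)" .
    have "E \<le> 4 * ((72 * real d ^ 2) ^ (2*d) / r ^ (2*d)) / c^2"
      unfolding E_def using X c by (intro divide_right_mono mult_left_mono) auto
    also have "\<dots> = 4 * (72 * real d ^ 2) ^ (2*d) / (c^2 * r^(2*d))" by (simp add: field_simps)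
    finally show ?thesis .
  qed
  define B0 where "B0 = 5 * real d * (72 * real d^2) ^ d / c"
  define N where "N = nat \<lceil>B0 / r^d\<rceil>"
  have B0pos: "B0 > 0" using c d1 by (simp add: B0_def)
  have N1: "real N \<ge> B0 / r^d" unfolding N_def by linarith
  have N2: "real N \<le> B0 / r^d + 1"
  proof -
    have "B0 / r^d > 0" using r B0pos by simp
    then have c0: "\<lceil>B0 / r^d\<rceil> \<ge> 0" by (subst zero_le_ceiling) linarith
    have "real N = of_int \<lceil>B0 / r^d\<rceil>" unfolding N_def using c0 by simp
    also have "\<dots> \<le> B0 / r^d + 1" by (rule of_int_ceiling_le_add_one)
    finally show ?thesis .
  qed
  have NE: "real N ^ 2 > 5 * real d * E"
  proof -
    have "(B0 / r^d)^2 \<le> real N ^ 2" using N1 B0pos r by (intro power_mono) auto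
    moreover have "(B0 / r^d)^2 = 25 * real d^2 * (72 * real d ^ 2) ^ (2*d) / (c^2 * r^(2*d))"
      by (simp add: B0_def power_divide power_mult_distrib power_mult[symmetric] mult.commute)
    moreover have "5 * real d * E \<le> 5 * real d * (4 * (72 * real d ^ 2) ^ (2*d) / (c^2 * r^(2*d)))"
      using Eb d1 by (intro mult_left_mono) auto
    moreover have "5 * real d * (4 * (72 * real d ^ 2) ^ (2*d) / (c^2 * r^(2*d))) < 25 * real d^2 * (72 * real d ^ 2) ^ (2*d) / (c^2 * r^(2*d))"
    proof -
      have pos: "(72 * real d ^ 2) ^ (2*d) / (c^2 * r^(2*d)) > 0" using c r d1 by simp
      have "20 * real d \<le> 20 * (real d * real d)" using d1 by (intro mult_left_mono) (auto simp: mult_le_cancel_left1)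
      then have "20 * real d < 25 * real d^2" using d1 by (simp add: power2_eq_square)
      then have "20 * real d * ((72 * real d ^ 2) ^ (2*d) / (c^2 * r^(2*d))) < 25 * real d^2 * ((72 * real d ^ 2) ^ (2*d) / (c^2 * r^(2*d)))"
        using pos by (intro mult_strict_right_mono) auto
      then show ?thesis by (simp add: mult.assoc)
    qed
    ultimately show ?thesis by linarith
  qed
  define G where "G = Phi M (\<lambda>_::'d. 1)"
  define H where "H i = Phi M ((\<lambda>_::'d. 1)(i := L))" for i
  define g where "g y = G y * (1 - 4/3 * (\<Sum>i\<in>UNIV. (1 - FF L (y$i) / real L)))" for y
  have gH: "g y = (1 - 4 * real d / 3) * G y + 4/3 * (\<Sum>i\<in>UNIV. H i y)" for y
  proof -
    define sm where "sm = (\<Sum>i\<in>UNIV. FF L (y$i) / real L)"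
    have "H i y = G y * (FF L (y$i) / real L)" for i unfolding H_def G_def Phi_upd Phi_one ..
    then have h1: "(\<Sum>i\<in>UNIV. H i y) = G y * sm" by (simp add: sum_distrib_left sm_def)
    have h2: "(\<Sum>i\<in>UNIV. (1 - FF L (y$i) / real L)) = real d - sm"
      by (simp add: sum_subtractf d_def sm_def)
    have "g y = G y * (1 - 4/3 * (real d - sm))" unfolding g_def h2 ..
    also have "\<dots> = (1 - 4 * real d / 3) * G y + 4/3 * (G y * sm)" by (simp add: field_simps)
    finally show ?thesis unfolding h1 .
  qed
  have OSg: "OS g N x \<alpha> = (1 - 4 * real d / 3) * OS G N x \<alpha> + 4/3 * (\<Sum>i\<in>UNIV. OS (H i) N x \<alpha>)"
  proof -
    have "g = (\<lambda>y. (1 - 4 * real d / 3) * G y + 4/3 * (\<Sum>i\<in>UNIV. H i y))" using gH by auto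
    then show ?thesis by (simp only: OS_lin)
  qed
  have oG: "\<bar>OS G N x \<alpha> - real N ^ 2 * mu M (\<lambda>_::'d. 1)\<bar> \<le> E"
    unfolding G_def E_def d_def by (rule Phi_orbit[OF c bad M1]) (use LM M1 in auto)
  have muG: "mu M (\<lambda>_::'d. 1) \<le> 1" using M1 by (intro mu_le1) auto
  have aG: "OS G N x \<alpha> \<le> real N ^ 2 + E"
  proof -
    have "real N ^ 2 * mu M (\<lambda>_::'d. 1) \<le> real N ^ 2" using muG by (simp add: mult_left_le)
    then show ?thesis using oG by linarith
  qed
  have bH: "OS (H i) N x \<alpha> \<ge> real N ^ 2 * (1 - 1 / (3 * real d)) - E" for i
  proof -
    have oH: "\<bar>OS (H i) N x \<alpha> - real N ^ 2 * mu M ((\<lambda>_::'d. 1)(i := L))\<bar> \<le> E"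
      unfolding H_def E_def d_def by (rule Phi_orbit[OF c bad M1]) (use LM M1 Lpos in auto)
    have "mu M ((\<lambda>_::'d. 1)(i := L)) \<ge> 1 - 2 * real L / real M" by (rule mu_upd[OF Lpos LM(2)])
    moreover have "2 * real L / real M = 1 / (3 * real d)" using Lpos d1 by (simp add: M_def field_simps)
    ultimately have "real N ^ 2 * mu M ((\<lambda>_::'d. 1)(i := L)) \<ge> real N ^ 2 * (1 - 1 / (3 * real d))"
      by (intro mult_left_mono) auto
    then show ?thesis using oH by linarith
  qed
  have sH: "(\<Sum>i\<in>UNIV. OS (H i) N x \<alpha>) \<ge> real d * (real N ^ 2 * (1 - 1 / (3 * real d)) - E)"
  proof -
    have "(\<Sum>i\<in>(UNIV::'d set). real N ^ 2 * (1 - 1 / (3 * real d)) - E) \<le> (\<Sum>i\<in>UNIV. OS (H i) N x \<alpha>)"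
      using bH by (intro sum_mono) auto
    then show ?thesis by (simp add: d_def)
  qed
  have p1: "(1 - 4 * real d / 3) * OS G N x \<alpha> \<ge> (1 - 4 * real d / 3) * (real N ^ 2 + E)"
    using aG d1 by (intro mult_left_mono_neg) auto
  have p2: "4/3 * (\<Sum>i\<in>UNIV. OS (H i) N x \<alpha>) \<ge> 4/3 * (real d * (real N ^ 2 * (1 - 1 / (3 * real d)) - E))"
    using sH by simp
  have iden: "(1 - 4 * real d / 3) * (real N ^ 2 + E) + 4/3 * (real d * (real N ^ 2 * (1 - 1 / (3 * real d)) - E))
      = 5/9 * real N ^ 2 + E - 8/3 * (real d * E)"
    using d1 by (simp add: field_simps)
  have pos: "OS g N x \<alpha> > 0"
  proof -
    have "OS g N x \<alpha> \<ge> 5/9 * real N ^ 2 + E - 8/3 * (real d * E)" using OSg p1 p2 iden by linarith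
    moreover have "5/9 * real N ^ 2 > 25/9 * (real d * E)" using NE by linarith
    moreover have "real d * E \<ge> 0" using d1 E0 by simp
    ultimately show ?thesis using E0 by linarith
  qed
  obtain j j' where jj: "j < N" "j' < N" "g (x + real (j + j' + 2) *\<^sub>R \<alpha>) > 0"
  proof -
    have "\<not> (\<forall>j<N. \<forall>j'<N. g (x + real (j + j' + 2) *\<^sub>R \<alpha>) \<le> 0)"
    proof
      assume h: "\<forall>j<N. \<forall>j'<N. g (x + real (j + j' + 2) *\<^sub>R \<alpha>) \<le> 0"
      have "OS g N x \<alpha> \<le> 0" unfolding OS_def using h by (intro sum_nonpos) auto
      then show False using pos by simp
    qed
    then show ?thesis using that by (auto simp: not_le)
  qed
  define n where "n = j + j' + 2"
  have "\<forall>i. dist_Z ((x + real n *\<^sub>R \<alpha>)$i) < r"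
  proof (rule ccontr)
    assume "\<not> (\<forall>i. dist_Z ((x + real n *\<^sub>R \<alpha>)$i) < r)"
    then obtain i0 where "dist_Z ((x + real n *\<^sub>R \<alpha>)$i0) \<ge> r" by (auto simp: not_less)
    then have "g (x + real n *\<^sub>R \<alpha>) \<le> 0" unfolding g_def G_def
      by (rule key_pointwise[OF r(1) L1])
    then show False using jj by (simp add: n_def)
  qed
  moreover have "n \<ge> 1" by (simp add: n_def)
  moreover have "real n \<le> (2 * B0 + 2) / r ^ d"
  proof -
    have "real n \<le> 2 * real N" using jj by (simp add: n_def)
    also have "\<dots> \<le> 2 * (B0 / r^d + 1)" using N2 by simp
    also have "\<dots> \<le> (2 * B0 + 2) / r ^ d"
    proof -
      have "r^d \<le> 1" using r by (simp add: power_le_one)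
      then have "2 \<le> 2 / r^d" using r by (simp add: divide_simps)
      then show ?thesis by (simp add: add_divide_distrib)
    qed
    finally show ?thesis .
  qed
  ultimately show ?thesis unfolding B0_def d_def by blast
qed



lemma G_low:
  fixes z :: "real^'d::finite"
  assumes "M \<ge> 1" "\<And>i. dist_Z (z$i) \<le> 1 / (8 * real M)"
  shows "Phi M (\<lambda>_. 1) z \<ge> (real M / 2) ^ CARD('d)"
proof -
  have "(\<Prod>i\<in>(UNIV::'d set). real M / 2) \<le> (\<Prod>i\<in>UNIV. FF M (z$i))"
  proof (intro prod_mono conjI)
    fix i :: 'd
    show "0 \<le> real M / 2" by simp
    show "real M / 2 \<le> FF M (z$i)" using assms by (intro FF_low) auto
  qed
  then show ?thesis unfolding Phi_one by simp
qed

lemma count: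
  fixes \<alpha> :: "real^'d::finite" and y :: "real^'d"
  assumes c: "c > 0" and bad: "\<And>m. m\<in>int_lattice \<Longrightarrow> m \<noteq> 0 \<Longrightarrow> dist_Z (m \<bullet> \<alpha>) > c * norm m powi (- int CARD('d))"
    and r: "0 < r" "r \<le> 1/16" and T: "real T * (8 * r) ^ CARD('d) \<ge> 1"
  shows "real (card {m\<in>{1..T}. \<forall>i. dist_Z ((y + real m *\<^sub>R \<alpha>)$i) \<le> r})
     \<le> 4 * 32 ^ CARD('d) * real T * r ^ CARD('d) + 4 * (4 * real CARD('d)) ^ (2 * CARD('d)) * 2 ^ CARD('d) / c^2"
proof -
  define d where "d = CARD('d)"
  define S where "S = {m\<in>{1..T}. \<forall>i. dist_Z ((y + real m *\<^sub>R \<alpha>)$i) \<le> r}"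
  define M where "M = nat \<lfloor>1 / (8 * r)\<rfloor>"
  have x2: "1 / (8 * r) \<ge> 2" using r by (simp add: field_simps)
  have fl0: "\<lfloor>1 / (8 * r)\<rfloor> \<ge> 0" using x2 by (subst zero_le_floor) linarith
  have Mr: "real M = of_int \<lfloor>1 / (8 * r)\<rfloor>" unfolding M_def using fl0 by simp
  have Mup: "real M \<le> 1 / (8 * r)" unfolding Mr by (rule of_int_floor_le)
  have Mlow: "real M \<ge> 1 / (16 * r)"
  proof -
    have "1 / (8 * r) < of_int (\<lfloor>1 / (8 * r)\<rfloor> + 1)" using floor_correct by blast
    then have "of_int \<lfloor>1 / (8 * r)\<rfloor> > 1 / (8 * r) - 1" by simp
    moreover have "1 / (8 * r) - 1 \<ge> 1 / (16 * r)" using x2 r by (simp add: field_simps)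
    ultimately show ?thesis unfolding Mr by linarith
  qed
  have M1: "M \<ge> 1"
  proof -
    have "1 / (16 * r) \<ge> 1" using r by (simp add: field_simps)
    then show ?thesis using Mlow by simp
  qed
  have Mpos: "real M > 0" using M1 by simp
  have rM: "r \<le> 1 / (8 * real M)" using Mup Mpos r by (simp add: field_simps)
  have T1: "T \<ge> 1"
  proof (rule ccontr)
    assume "\<not> T \<ge> 1" then have "T = 0" by simp
    then show False using T by simp
  qed
  define N where "N = 2 * T"
  define y' where "y' = y - real T *\<^sub>R \<alpha>"
  define G where "G = Phi M (\<lambda>_::'d. 1)"
  have G0: "G z \<ge> 0" for z unfolding G_def by (rule G_nonneg)
  define E where "E = 4 * (2 * real d * real (2*M)) ^ (2 * d) / c^2"
  have oG: "\<bar>OS G N y' \<alpha> - real N ^ 2 * mu M (\<lambda>_::'d. 1)\<bar> \<le> E"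
    unfolding G_def E_def d_def by (rule Phi_orbit[OF c bad M1]) (use M1 in auto)
  have muG: "mu M (\<lambda>_::'d. 1) \<le> 1" using M1 by (intro mu_le1) auto
  have up: "OS G N y' \<alpha> \<le> 4 * real T ^ 2 + E"
  proof -
    have "real N ^ 2 * mu M (\<lambda>_::'d. 1) \<le> real N ^ 2" using muG by (simp add: mult_left_le)
    moreover have "real N ^ 2 = 4 * real T ^ 2" by (simp add: N_def power2_eq_square)
    ultimately show ?thesis using oG by linarith
  qed
  have inner: "(\<Sum>j'<N. G (y' + real (j + j' + 2) *\<^sub>R \<alpha>)) \<ge> (\<Sum>m\<in>{1..T}. G (y + real m *\<^sub>R \<alpha>))"
    if j: "j < T" for j
  proof -
    define h where "h m = m + T - j - 2" for m
    have inj: "inj_on h {1..T}" using j by (auto simp: h_def inj_on_def)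
    have img: "h ` {1..T} \<subseteq> {..<N}" using j by (auto simp: h_def N_def)
    have eq: "G (y' + real (j + h m + 2) *\<^sub>R \<alpha>) = G (y + real m *\<^sub>R \<alpha>)" if "m \<in> {1..T}" for m
    proof -
      have "j + h m + 2 = m + T" using that j unfolding h_def by auto
      then have "y' + real (j + h m + 2) *\<^sub>R \<alpha> = y + real m *\<^sub>R \<alpha>"
        by (simp add: y'_def algebra_simps)
      then show ?thesis by simp
    qed
    have "(\<Sum>m\<in>{1..T}. G (y + real m *\<^sub>R \<alpha>)) = (\<Sum>m\<in>{1..T}. G (y' + real (j + h m + 2) *\<^sub>R \<alpha>))"
      using eq by (intro sum.cong) auto
    also have "\<dots> = (\<Sum>j'\<in>h ` {1..T}. G (y' + real (j + j' + 2) *\<^sub>R \<alpha>))"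
      using inj by (simp add: sum.reindex)
    also have "\<dots> \<le> (\<Sum>j'<N. G (y' + real (j + j' + 2) *\<^sub>R \<alpha>))"
      using img G0 by (intro sum_mono2) auto
    finally show ?thesis .
  qed
  have low: "OS G N y' \<alpha> \<ge> real T * (real (card S) * (real M / 2) ^ d)"
  proof -
    have "(\<Sum>j<T. \<Sum>j'<N. G (y' + real (j + j' + 2) *\<^sub>R \<alpha>)) \<le> OS G N y' \<alpha>"
      unfolding OS_def using G0 by (intro sum_mono2) (auto simp: N_def intro: sum_nonneg)
    moreover have "(\<Sum>j<T. (\<Sum>m\<in>{1..T}. G (y + real m *\<^sub>R \<alpha>))) \<le> (\<Sum>j<T. \<Sum>j'<N. G (y' + real (j + j' + 2) *\<^sub>R \<alpha>))"
      using inner by (intro sum_mono) auto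
    moreover have "real (card S) * (real M / 2) ^ d \<le> (\<Sum>m\<in>{1..T}. G (y + real m *\<^sub>R \<alpha>))"
    proof -
      have "real (card S) * (real M / 2) ^ d = (\<Sum>m\<in>S. (real M / 2) ^ d)" by simp
      also have "\<dots> \<le> (\<Sum>m\<in>S. G (y + real m *\<^sub>R \<alpha>))"
      proof (intro sum_mono)
        fix m assume "m \<in> S"
        then have "dist_Z ((y + real m *\<^sub>R \<alpha>)$i) \<le> 1 / (8 * real M)" for i
          using rM unfolding S_def by (auto intro: order_trans)
        then show "(real M / 2) ^ d \<le> G (y + real m *\<^sub>R \<alpha>)"
          unfolding G_def d_def using M1 by (intro G_low) auto
      qed
      also have "\<dots> \<le> (\<Sum>m\<in>{1..T}. G (y + real m *\<^sub>R \<alpha>))"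
        using G0 by (intro sum_mono2) (auto simp: S_def)
      finally show ?thesis .
    qed
    then have "real T * (real (card S) * (real M / 2) ^ d) \<le> real T * (\<Sum>m\<in>{1..T}. G (y + real m *\<^sub>R \<alpha>))"
      by (rule mult_left_mono) simp
    then have "real T * (real (card S) * (real M / 2) ^ d) \<le> (\<Sum>j<T. (\<Sum>m\<in>{1..T}. G (y + real m *\<^sub>R \<alpha>)))"
      by simp
    ultimately show ?thesis by linarith
  qed
  define K where "K = real T * (real M / 2) ^ d"
  have Kpos: "K > 0" using T1 Mpos by (simp add: K_def)
  define A where "A = 4 * 32 ^ d * real T * r ^ d"
  define C2 where "C2 = 4 * (4 * real d) ^ (2 * d) * 2 ^ d / c^2"
  have a1: "4 * real T ^ 2 \<le> K * A"
  proof -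
    have "16 * real M * r \<ge> 1" using Mlow r by (simp add: field_simps)
    then have "1 \<le> (16 * real M * r) ^ d" by (simp add: one_le_power)
    also have "16 * real M * r = (real M / 2) * 32 * r" by simp
    also have "((real M / 2) * 32 * r) ^ d = (real M / 2) ^ d * 32 ^ d * r ^ d"
      by (simp only: power_mult_distrib)
    finally have X: "1 \<le> (real M / 2) ^ d * 32 ^ d * r ^ d" .
    have "4 * real T ^ 2 * 1 \<le> 4 * real T ^ 2 * ((real M / 2) ^ d * 32 ^ d * r ^ d)"
      using X by (intro mult_left_mono) auto
    also have "4 * real T ^ 2 * ((real M / 2) ^ d * 32 ^ d * r ^ d) = K * A"
      unfolding K_def A_def power2_eq_square by (simp only: mult_ac)
    finally show ?thesis by simp
  qed
  have a2: "E \<le> K * C2"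
  proof -
    have Md: "real M ^ d \<le> real T"
    proof -
      have "real M ^ d \<le> (1 / (8 * r)) ^ d" using Mup Mpos by (intro power_mono) auto
      also have "(1 / (8 * r)) ^ d = 1 / (8 * r) ^ d" by (rule power_one_over)
      also have "1 / (8 * r) ^ d \<le> real T" using T r unfolding d_def by (simp add: divide_le_eq)
      finally show ?thesis .
    qed
    have e1: "2 * real d * real (2*M) = (4*real d) * real M" by simp
    have e2: "((4*real d) * real M)^(2*d) = (4*real d)^(2*d) * (real M^d * real M^d)"
    proof -
      have m2: "real M ^ (2*d) = real M^d * real M^d" by (simp only: mult_2 power_add)
      show ?thesis by (simp only: power_mult_distrib[of "4*real d" "real M"] m2)
    qed
    have "E = 4 * ((4*real d)^(2*d) * (real M^d * real M^d)) / c^2" unfolding E_def e1 e2 ..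
    also have "\<dots> \<le> 4 * ((4*real d)^(2*d) * (real M^d * real T)) / c^2"
      using Md c by (intro divide_right_mono mult_left_mono) auto
    also have "\<dots> = K * C2"
    proof -
      have "(real M/2)^d * 2^d = real M^d" by (simp add: power_divide)
      then show ?thesis unfolding K_def C2_def by (simp add: mult_ac)
    qed
    finally show ?thesis .
  qed
  have "K * real (card S) \<le> K * (A + C2)"
    using low up a1 a2 by (simp add: K_def algebra_simps)
  then have "real (card S) \<le> A + C2" using Kpos by simp
  then show ?thesis by (simp add: S_def A_def C2_def d_def)
qed



lemma return_props:
  fixes \<alpha> :: "real^'d::finite" and D' :: "(real^'d) set"
  assumes "n \<ge> 1" "q + real n *\<^sub>R \<alpha> \<in> {x + z | x z. x \<in> D' \<and> z \<in> int_lattice}"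
  shows "return_time \<alpha> D' q \<le> n" "return_time \<alpha> D' q \<ge> 1"
    "q + real (return_time \<alpha> D' q) *\<^sub>R \<alpha> \<in> {x + z | x z. x \<in> D' \<and> z \<in> int_lattice}"
proof -
  let ?P = "\<lambda>n::nat. n \<ge> 1 \<and> q + of_nat n *\<^sub>R \<alpha> \<in> {x + z | x z. x \<in> D' \<and> z \<in> int_lattice}"
  have Pn: "?P n" using assms by simp
  show "return_time \<alpha> D' q \<le> n" unfolding return_time_def by (rule Least_le[where P="?P", OF Pn])
  have "?P (LEAST n. ?P n)" by (rule LeastI[where P="?P", OF Pn])
  then show "return_time \<alpha> D' q \<ge> 1"
    "q + real (return_time \<alpha> D' q) *\<^sub>R \<alpha> \<in> {x + z | x z. x \<in> D' \<and> z \<in> int_lattice}"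
    unfolding return_time_def by simp_all
qed

theorem theorem1p6:
  fixes D :: "(real ^ 'd) set" and \<alpha> :: "real ^ 'd"
  assumes "CARD('d) \<ge> 2"
    and "bounded D" and "convex D" and "interior D \<noteq> {}"
    and "badly_approximable \<alpha>"
  shows "\<exists>B::nat. \<forall>R::real. R \<ge> 1 \<longrightarrow>
           finite (return_times \<alpha> ((\<lambda>x. inverse R *\<^sub>R x) ` D)) \<and>
           card (return_times \<alpha> ((\<lambda>x. inverse R *\<^sub>R x) ` D)) \<le> B"
proof -
  define d where "d = CARD('d)"
  have d1: "real d \<ge> 1" by (simp add: d_def Suc_le_eq)
  obtain c where c: "c > 0" and bad: "\<And>m. m\<in>int_lattice \<Longrightarrow> m \<noteq> 0 \<Longrightarrow> dist_Z (m \<bullet> \<alpha>) > c * norm m powi (- int CARD('d))"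
    using assms(5) unfolding badly_approximable_def by blast
  obtain p where "p \<in> interior D" using assms(4) by auto
  then obtain \<epsilon> where \<epsilon>: "\<epsilon> > 0" "ball p \<epsilon> \<subseteq> D" by (auto simp: mem_interior)
  obtain BB where BB: "BB > 0" "\<And>x. x \<in> D \<Longrightarrow> norm x \<le> BB" using assms(2) bounded_pos by blast
  define \<rho> where "\<rho> = min \<epsilon> 1"
  have \<rho>: "\<rho> > 0" "\<rho> \<le> 1" "\<rho> \<le> \<epsilon>" using \<epsilon> by (auto simp: \<rho>_def)
  define A1 where "A1 = 2 * (5 * real d * (72 * real d^2) ^ d / c) + 2"
  have "5 * real d * (72 * real d^2) ^ d / c \<ge> 0" using c by simp
  then have A1: "A1 > 0" unfolding A1_def by linarith
  define C2 where "C2 = 4 * (4 * real d) ^ (2 * d) * 2 ^ d / c^2"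
  define Bd1 where "Bd1 = 4 * 32 ^ d * (A1 * (2 * BB * real d / \<rho>) ^ d + 2) + C2"
  define Bd2 where "Bd2 = A1 * (32 * BB * real d / \<rho>) ^ d"
  define Bn where "Bn = nat \<lceil>max Bd1 Bd2\<rceil>"
  have main: "finite (return_times \<alpha> ((\<lambda>x. inverse R *\<^sub>R x) ` D)) \<and>
           card (return_times \<alpha> ((\<lambda>x. inverse R *\<^sub>R x) ` D)) \<le> Bn" if R: "R \<ge> 1" for R
  proof -
    define D' where "D' = (\<lambda>x. inverse R *\<^sub>R x) ` D"
    define r1 where "r1 = \<rho> / (real d * R)"
    have r1: "r1 > 0" "r1 \<le> 1" using \<rho> d1 R by (auto simp: r1_def field_simps intro: order_trans)
    define T1 where "T1 = nat \<lfloor>A1 / r1 ^ d\<rfloor>"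
    have ballD: "y \<in> D'" if "dist (inverse R *\<^sub>R p) y < \<epsilon> / R" for y
    proof -
      have "dist p (R *\<^sub>R y) = R * dist (inverse R *\<^sub>R p) y"
      proof -
        have "p - R *\<^sub>R y = R *\<^sub>R (inverse R *\<^sub>R p - y)" using R by (simp add: algebra_simps)
        then show ?thesis using R by (simp add: dist_norm)
      qed
      also have "\<dots> < R * (\<epsilon> / R)" using that R by (intro mult_strict_left_mono) auto
      also have "\<dots> = \<epsilon>" using R by simp
      finally have "R *\<^sub>R y \<in> D" using \<epsilon>(2) by auto
      moreover have "y = inverse R *\<^sub>R (R *\<^sub>R y)" using R by simp
      ultimately show ?thesis unfolding D'_def by blast
    qed
    have rt: "return_time \<alpha> D' q \<ge> 1 \<and> return_time \<alpha> D' q \<le> T1 \<and>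
       q + real (return_time \<alpha> D' q) *\<^sub>R \<alpha> \<in> {x + z | x z. x \<in> D' \<and> z \<in> int_lattice}" if q: "q \<in> D'" for q
    proof -
      obtain n where n: "n \<ge> 1" "real n \<le> A1 / r1 ^ d"
        and hi: "\<forall>i. dist_Z ((q - inverse R *\<^sub>R p + real n *\<^sub>R \<alpha>)$i) < r1"
        using hit[OF c bad r1, of "q - inverse R *\<^sub>R p"] unfolding A1_def d_def by blast
      define w where "w = q - inverse R *\<^sub>R p + real n *\<^sub>R \<alpha>"
      define z :: "real^'d" where "z = (\<chi> i. of_int (round (w$i)))"
      have zl: "z \<in> int_lattice" by (simp add: z_def int_lattice_def)
      have "norm (w - z) \<le> (\<Sum>i\<in>UNIV. \<bar>(w - z)$i\<bar>)" by (rule norm_le_l1_cart)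
      also have "\<dots> < (\<Sum>i\<in>(UNIV::'d set). r1)"
        using hi by (intro sum_strict_mono) (auto simp: z_def w_def dist_Z_def)
      also have "\<dots> = real d * r1" by (simp add: d_def)
      also have "\<dots> = \<rho> / R" using d1 R by (simp add: r1_def)
      also have "\<dots> \<le> \<epsilon> / R" using \<rho> R by (intro divide_right_mono) auto
      finally have "norm (w - z) < \<epsilon> / R" .
      then have "inverse R *\<^sub>R p + (w - z) \<in> D'" by (intro ballD) (simp add: dist_norm norm_minus_commute)
      moreover have "q + real n *\<^sub>R \<alpha> = (inverse R *\<^sub>R p + (w - z)) + z" by (simp add: w_def)
      ultimately have mem: "q + real n *\<^sub>R \<alpha> \<in> {x + z | x z. x \<in> D' \<and> z \<in> int_lattice}" using zl by blast
      have "n \<le> T1"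
      proof -
        have "A1 / r1 ^ d \<ge> 0" using A1 r1 by simp
        then show ?thesis using n(2) unfolding T1_def by (simp add: le_nat_floor)
      qed
      then show ?thesis using return_props[OF n(1) mem] by auto
    qed
    have sub1: "return_times \<alpha> D' \<subseteq> {1..T1}" using rt by (auto simp: return_times_def)
    have fin: "finite (return_times \<alpha> D')" using sub1 finite_subset by blast
    define r2 where "r2 = 2 * BB / R"
    have r2: "r2 > 0" using BB R by (simp add: r2_def)
    have sub2: "return_times \<alpha> D' \<subseteq> {m\<in>{1..T1}. \<forall>i. dist_Z ((0 + real m *\<^sub>R \<alpha>)$i) \<le> r2}"
    proof
      fix m assume "m \<in> return_times \<alpha> D'"
      then obtain q where q: "q \<in> D'" "m = return_time \<alpha> D' q" by (auto simp: return_times_def)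
      from rt[OF q(1)] obtain x z where xz: "x \<in> D'" "z \<in> int_lattice" "q + real m *\<^sub>R \<alpha> = x + z"
        and m: "m \<ge> 1" "m \<le> T1" using q(2) by blast
      have nD: "norm y \<le> BB / R" if yD: "y \<in> D'" for y
      proof -
        obtain y0 where "y0 \<in> D" "y = inverse R *\<^sub>R y0" using yD unfolding D'_def by blast
        note yy = this
        have "norm y = inverse R * norm y0" using yy(2) R by simp
        also have "\<dots> \<le> inverse R * BB" using BB(2)[OF yy(1)] R by (intro mult_left_mono) auto
        also have "\<dots> = BB / R" by (simp add: divide_inverse mult.commute)
        finally show ?thesis .
      qed
      have "dist_Z ((real m *\<^sub>R \<alpha>)$i) \<le> r2" for i
      proof -
        obtain k where k: "z$i = of_int k" using xz(2) by (auto simp: int_lattice_def elim: Ints_cases)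
        have "dist_Z ((real m *\<^sub>R \<alpha>)$i) \<le> \<bar>(real m *\<^sub>R \<alpha>)$i - of_int k\<bar>" by (rule dZ_min)
        also have "(real m *\<^sub>R \<alpha>)$i - of_int k = (x - q)$i"
        proof -
          have "real m *\<^sub>R \<alpha> = (q + real m *\<^sub>R \<alpha>) - q" by simp
          also have "\<dots> = (x + z) - q" using xz(3) by simp
          finally have "(real m *\<^sub>R \<alpha>)$i = x$i + z$i - q$i" by simp
          then show ?thesis using k by simp
        qed
        also have "\<bar>(x - q)$i\<bar> \<le> norm (x - q)" by (rule component_le_norm_cart)
        also have "\<dots> \<le> norm x + norm q" by (rule norm_triangle_ineq4)
        also have "\<dots> \<le> BB / R + BB / R" using nD xz(1) q(1) by (intro add_mono) auto
        also have "\<dots> = r2" by (simp add: r2_def)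
        finally show ?thesis .
      qed
      then show "m \<in> {m\<in>{1..T1}. \<forall>i. dist_Z ((0 + real m *\<^sub>R \<alpha>)$i) \<le> r2}" using m by simp
    qed
    have cardB: "real (card (return_times \<alpha> D')) \<le> max Bd1 Bd2"
    proof (cases "R \<ge> 32 * BB")
      case True
      have r2s: "r2 \<le> 1/16" using True BB R by (simp add: r2_def field_simps)
      define T2 where "T2 = nat \<lceil>1 / (8 * r2) ^ d\<rceil>"
      define T where "T = max T1 T2"
      have T2a: "real T2 \<ge> 1 / (8 * r2) ^ d" unfolding T2_def by linarith
      have T2b: "real T2 \<le> 1 / (8 * r2) ^ d + 1"
      proof -
        have "1 / (8 * r2) ^ d > 0" using r2 by simp
        then have c0: "\<lceil>1 / (8 * r2) ^ d\<rceil> \<ge> 0" by (subst zero_le_ceiling) linarith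
        have "real T2 = of_int \<lceil>1 / (8 * r2) ^ d\<rceil>" unfolding T2_def using c0 by simp
        also have "\<dots> \<le> 1 / (8 * r2) ^ d + 1" by (rule of_int_ceiling_le_add_one)
        finally show ?thesis .
      qed
      have T1b: "real T1 \<le> A1 / r1 ^ d"
      proof -
        have "A1 / r1 ^ d \<ge> 0" using A1 r1 by simp
        then have c0: "\<lfloor>A1 / r1 ^ d\<rfloor> \<ge> 0" by simp
        have "real T1 = of_int \<lfloor>A1 / r1 ^ d\<rfloor>" unfolding T1_def using c0 by simp
        also have "\<dots> \<le> A1 / r1 ^ d" by (rule of_int_floor_le)
        finally show ?thesis .
      qed
      have TT: "real T * (8 * r2) ^ CARD('d) \<ge> 1"
      proof -
        have "real T \<ge> 1 / (8 * r2) ^ d" using T2a unfolding T_def by linarith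
        then have "real T * (8 * r2) ^ d \<ge> 1 / (8 * r2) ^ d * (8 * r2) ^ d"
          using r2 by (intro mult_right_mono) auto
        then show ?thesis using r2 by (simp add: d_def)
      qed
      have Tb: "real T * r2 ^ d \<le> A1 * (2 * BB * real d / \<rho>) ^ d + 2"
      proof -
        have "real T \<le> A1 / r1 ^ d + (1 / (8 * r2) ^ d + 1)"
          using T1b T2b A1 r1 unfolding T_def by (auto simp: max_def)
        then have "real T * r2 ^ d \<le> (A1 / r1 ^ d + (1 / (8 * r2) ^ d + 1)) * r2 ^ d"
          using r2 by (intro mult_right_mono) auto
        also have "\<dots> = A1 * (r2 / r1) ^ d + (1 / 8 ^ d + r2 ^ d)"
          using r1 r2 by (simp add: field_simps power_divide power_mult_distrib)
        also have "r2 / r1 = 2 * BB * real d / \<rho>"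
          using R \<rho> d1 by (simp add: r2_def r1_def field_simps)
        also have "1 / 8 ^ d + r2 ^ d \<le> 2"
        proof -
          have "1 / (8::real) ^ d \<le> 1" by simp
          moreover have "r2 ^ d \<le> 1" using r2 r2s by (intro power_le_one) auto
          ultimately show ?thesis by linarith
        qed
        finally show ?thesis by simp
      qed
      have "return_times \<alpha> D' \<subseteq> {m\<in>{1..T}. \<forall>i. dist_Z ((0 + real m *\<^sub>R \<alpha>)$i) \<le> r2}"
        using sub2 by (auto simp: T_def)
      then have "card (return_times \<alpha> D') \<le> card {m\<in>{1..T}. \<forall>i. dist_Z ((0 + real m *\<^sub>R \<alpha>)$i) \<le> r2}"
        by (intro card_mono) auto
      then have "real (card (return_times \<alpha> D')) \<le> real (card {m\<in>{1..T}. \<forall>i. dist_Z ((0 + real m *\<^sub>R \<alpha>)$i) \<le> r2})"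
        by (simp only: of_nat_le_iff)
      also have "\<dots> \<le> 4 * 32 ^ CARD('d) * real T * r2 ^ CARD('d) + 4 * (4 * real CARD('d)) ^ (2 * CARD('d)) * 2 ^ CARD('d) / c^2"
        by (rule count[OF c bad r2 r2s TT])
      also have "\<dots> = 4 * 32 ^ d * (real T * r2 ^ d) + C2" by (simp add: C2_def d_def mult_ac)
      also have "\<dots> \<le> 4 * 32 ^ d * (A1 * (2 * BB * real d / \<rho>) ^ d + 2) + C2"
        using Tb by (intro add_right_mono mult_left_mono) auto
      also have "\<dots> = Bd1" by (simp add: Bd1_def)
      finally show ?thesis by simp
    next
      case False
      have "card (return_times \<alpha> D') \<le> card {1..T1}" using sub1 by (intro card_mono) auto
      then have "real (card (return_times \<alpha> D')) \<le> real T1" by simp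
      also have "\<dots> \<le> A1 / r1 ^ d"
      proof -
        have "A1 / r1 ^ d \<ge> 0" using A1 r1 by simp
        then have c0: "\<lfloor>A1 / r1 ^ d\<rfloor> \<ge> 0" by simp
        have "real T1 = of_int \<lfloor>A1 / r1 ^ d\<rfloor>" unfolding T1_def using c0 by simp
        also have "\<dots> \<le> A1 / r1 ^ d" by (rule of_int_floor_le)
        finally show ?thesis .
      qed
      also have "A1 / r1 ^ d = A1 * (real d * R / \<rho>) ^ d"
        using \<rho> by (simp add: r1_def power_divide)
      also have "\<dots> \<le> A1 * (32 * BB * real d / \<rho>) ^ d"
      proof -
        have "real d * R / \<rho> \<le> 32 * BB * real d / \<rho>"
          using False d1 \<rho> by (intro divide_right_mono) (auto simp: mult.commute)
        then show ?thesis using A1 d1 R \<rho> by (intro mult_left_mono power_mono) auto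
      qed
      also have "\<dots> = Bd2" by (simp add: Bd2_def)
      finally show ?thesis by simp
    qed
    have "card (return_times \<alpha> D') \<le> Bn"
    proof -
      have "real (card (return_times \<alpha> D')) \<le> of_int \<lceil>max Bd1 Bd2\<rceil>"
        using cardB by (meson le_of_int_ceiling order_trans)
      then show ?thesis unfolding Bn_def by linarith
    qed
    then show ?thesis using fin unfolding D'_def by simp
  qed
  show ?thesis using main by blast
qed

end
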